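(* Let $N$ be a finite set with $|N|\ge2$, and assume that $\langle o,\eta\rangle\le u$, with $o\in\mathbb{R}^{\Upsilon}$ and $u\in\mathbb{R}$, is valid for all $\eta\in P_N$. Then $u\ge 0$. Moreover: (i) $u=0$ if and only if the face of $P_N$ defined by this inequality contains $\eta_{G_\emptyset}$ (the zero vector), where $G_\emptyset$ is the empty graph over $N$; (ii) if $u=0$ then $o(a|B)\le 0$ for every $(a|B)\in\Upsilon$; (iii) the facet-defining inequalities for $P_N$ that are tight at the empty graph are exactly (up to positive scaling) the inequalities $-\eta(a|B)\le 0$, $(a|B)\in\Upsilon$; (iv) if the inequality is facet-defining for $P_N$ and $u>0$, then $o(a|B)\ge o(a|A)\ge 0$ whenever $a\in N$ and $\emptyset\neq A\subseteq B\subseteq N\setminus\{a\}$.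
   Context: $\mathrm{DAG}(N)$ is the set of acyclic directed graphs over $N$; $\mathrm{pa}_G(a)$ is the parent set of $a$ in $G$; the empty graph has no arrows. $\Upsilon=\{(a|B): a\in N,\ \emptyset\neq B\subseteq N\setminus\{a\}\}$; $\eta_G\in\mathbb{R}^{\Upsilon}$ has $\eta_G(a|B)=1$ if $B=\mathrm{pa}_G(a)$, else $0$; $P_N=\mathrm{conv}\{\eta_G:G\in\mathrm{DAG}(N)\}$ is the family-variable polytope, of dimension $|\Upsilon|$. *)

theory Defs
  imports Complex_Main
begin

text \<open>A directed graph over N is represented by its set of arrows E (pairs (b,a) meaning b -> a).\<close>

definition DAGs :: "'a set \<Rightarrow> ('a \<times> 'a) set set" where
  "DAGs N = {E. E \<subseteq> N \<times> N \<and> acyclic E}"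

definition pa :: "('a \<times> 'a) set \<Rightarrow> 'a \<Rightarrow> 'a set" where
  "pa E a = {b. (b, a) \<in> E}"

definition Ups :: "'a set \<Rightarrow> ('a \<times> 'a set) set" where
  "Ups N = {(a, B). a \<in> N \<and> B \<noteq> {} \<and> B \<subseteq> N - {a}}"

text \<open>Vectors in R^Upsilon are functions, meaningful on Ups N (and taken to be 0 outside).\<close>
definition eta :: "'a set \<Rightarrow> ('a \<times> 'a) set \<Rightarrow> ('a \<times> 'a set) \<Rightarrow> real" where
  "eta N E = (\<lambda>(a, B). if (a, B) \<in> Ups N \<and> B = pa E a then 1 else 0)"

definition inner_Ups :: "'a set \<Rightarrow> ('a \<times> 'a set \<Rightarrow> real) \<Rightarrow> ('a \<times> 'a set \<Rightarrow> real) \<Rightarrow> real" where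
  "inner_Ups N o' x = (\<Sum>c\<in>Ups N. o' c * x c)"

definition conv_fin :: "('b \<Rightarrow> real) set \<Rightarrow> ('b \<Rightarrow> real) set" where
  "conv_fin V = {x. \<exists>w. (\<forall>v\<in>V. w v \<ge> 0) \<and> (\<Sum>v\<in>V. w v) = 1 \<and>
                        x = (\<lambda>c. \<Sum>v\<in>V. w v * v c)}"

definition P :: "'a set \<Rightarrow> ('a \<times> 'a set \<Rightarrow> real) set" where
  "P N = conv_fin (eta N ` DAGs N)"

definition valid :: "'a set \<Rightarrow> ('a \<times> 'a set \<Rightarrow> real) \<Rightarrow> real \<Rightarrow> bool" where
  "valid N o' u \<longleftrightarrow> (\<forall>x\<in>P N. inner_Ups N o' x \<le> u)"

definition face :: "'a set \<Rightarrow> ('a \<times> 'a set \<Rightarrow> real) \<Rightarrow> real \<Rightarrow> ('a \<times> 'a set \<Rightarrow> real) set" where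
  "face N o' u = {x \<in> P N. inner_Ups N o' x = u}"

definition aff_indep :: "'a set \<Rightarrow> ('a \<times> 'a set \<Rightarrow> real) set \<Rightarrow> bool" where
  "aff_indep N S \<longleftrightarrow> finite S \<and>
     (\<forall>c. (\<Sum>x\<in>S. c x) = 0 \<and> (\<forall>i\<in>Ups N. (\<Sum>x\<in>S. c x * x i) = 0) \<longrightarrow> (\<forall>x\<in>S. c x = 0))"

definition has_aff_dim :: "'a set \<Rightarrow> ('a \<times> 'a set \<Rightarrow> real) set \<Rightarrow> nat \<Rightarrow> bool" where
  "has_aff_dim N F d \<longleftrightarrow> (\<exists>S\<subseteq>F. aff_indep N S \<and> card S = d + 1) \<and>
                          (\<forall>S\<subseteq>F. aff_indep N S \<longrightarrow> card S \<le> d + 1)"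

text \<open>Facet-defining: valid and the induced face has dimension dim P_N - 1 = |Upsilon| - 1.\<close>
definition facet_defining :: "'a set \<Rightarrow> ('a \<times> 'a set \<Rightarrow> real) \<Rightarrow> real \<Rightarrow> bool" where
  "facet_defining N o' u \<longleftrightarrow> valid N o' u \<and> has_aff_dim N (face N o' u) (card (Ups N) - 1)"

end

theory Submission
  imports Defs
begin

lemma lin_dep:
  fixes f :: "'k \<Rightarrow> 'i \<Rightarrow> real"
  assumes "finite I" "finite K" "card I < card K"
  shows "\<exists>c. (\<exists>k\<in>K. c k \<noteq> 0) \<and> (\<forall>i\<in>I. (\<Sum>k\<in>K. c k * f k i) = 0)"
  using assms
proof (induction I arbitrary: K f rule: finite_induct)
  case empty
  then obtain k0 where "k0 \<in> K" by fastforce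
  then show ?case by (intro exI[of _ "\<lambda>k. if k = k0 then 1 else 0"]) auto
next
  case (insert j I)
  show ?case
  proof (cases "\<forall>k\<in>K. f k j = 0")
    case True
    from insert.IH[of K f] insert.prems insert.hyps obtain c where
      c: "\<exists>k\<in>K. c k \<noteq> 0" "\<forall>i\<in>I. (\<Sum>k\<in>K. c k * f k i) = 0" by auto
    then show ?thesis using True by (intro exI[of _ c]) auto
  next
    case False
    then obtain k0 where k0: "k0 \<in> K" "f k0 j \<noteq> 0" by auto
    define K' where "K' = K - {k0}"
    define f' where "f' = (\<lambda>k i. f k i - f k j / f k0 j * f k0 i)"
    have cK': "card I < card K'" using insert.prems insert.hyps k0 unfolding K'_def
      by (simp add: card_Diff_singleton)
    from insert.IH[of K' f'] insert.prems cK' obtain c' where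
      c': "\<exists>k\<in>K'. c' k \<noteq> 0" "\<forall>i\<in>I. (\<Sum>k\<in>K'. c' k * f' k i) = 0" unfolding K'_def by auto
    define s where "s = (\<Sum>k\<in>K'. c' k * f k j)"
    define c where "c = (\<lambda>k. if k = k0 then - s / f k0 j else c' k)"
    have fin: "finite K'" using insert.prems unfolding K'_def by auto
    have split: "(\<Sum>k\<in>K. c k * f k i) = c k0 * f k0 i + (\<Sum>k\<in>K'. c' k * f k i)" for i
    proof -
      have "(\<Sum>k\<in>K. c k * f k i) = c k0 * f k0 i + (\<Sum>k\<in>K'. c k * f k i)"
        using k0 insert.prems unfolding K'_def by (simp add: sum.remove)
      moreover have "(\<Sum>k\<in>K'. c k * f k i) = (\<Sum>k\<in>K'. c' k * f k i)"
        by (rule sum.cong) (auto simp: c_def K'_def)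
      ultimately show ?thesis by simp
    qed
    have "\<exists>k\<in>K. c k \<noteq> 0" using c' unfolding c_def K'_def by auto
    moreover have "\<forall>i\<in>insert j I. (\<Sum>k\<in>K. c k * f k i) = 0"
    proof
      fix i assume i: "i \<in> insert j I"
      show "(\<Sum>k\<in>K. c k * f k i) = 0"
      proof (cases "i = j")
        case True
        have "(\<Sum>k\<in>K. c k * f k i) = c k0 * f k0 j + s" using split[of j] True s_def by simp
        then show ?thesis using k0 by (simp add: c_def)
      next
        case False
        then have "i \<in> I" using i by auto
        then have "(\<Sum>k\<in>K'. c' k * f' k i) = 0" using c' by auto
        moreover have "(\<Sum>k\<in>K'. c' k * f' k i) = (\<Sum>k\<in>K'. c' k * f k i) - s / f k0 j * f k0 i"
          unfolding f'_def s_def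
          by (simp add: algebra_simps sum_subtractf sum_distrib_left sum_distrib_right sum_divide_distrib)
        moreover have "c k0 * f k0 i = - s / f k0 j * f k0 i" by (simp add: c_def)
        ultimately show ?thesis using split[of i] by simp
      qed
    qed
    ultimately show ?thesis by blast
  qed
qed

lemma aff_bound:
  assumes fU: "finite (Ups N)" and R: "R \<subseteq> Ups N" and ai: "aff_indep N S"
    and rep: "\<forall>x\<in>S. \<forall>r\<in>R. x r = \<alpha> r + (\<Sum>i\<in>Ups N - R. \<beta> r i * x i)"
  shows "card S \<le> card (Ups N - R) + 1"
proof (rule ccontr)
  assume "\<not> ?thesis"
  hence lt: "card (Ups N - R) + 1 < card S" by simp
  define I where "I = insert None (Some ` (Ups N - R))"
  define f where "f = (\<lambda>(x::'a \<times> 'a set \<Rightarrow> real) oo. case oo of None \<Rightarrow> 1 | Some i \<Rightarrow> x i)"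
  have fS: "finite S" using ai unfolding aff_indep_def by auto
  have cI: "card I = card (Ups N - R) + 1" unfolding I_def using fU
    by (simp add: card_image)
  have fI: "finite I" unfolding I_def using fU by auto
  obtain c where c: "\<exists>k\<in>S. c k \<noteq> 0" "\<forall>i\<in>I. (\<Sum>k\<in>S. c k * f k i) = 0"
    using lin_dep[OF fI fS, of f] cI lt by auto
  have s0: "(\<Sum>x\<in>S. c x) = 0" using c(2)[rule_format, of None] by (simp add: I_def f_def)
  have s1: "(\<Sum>x\<in>S. c x * x i) = 0" if "i \<in> Ups N - R" for i
    using c(2)[rule_format, of "Some i"] that by (simp add: I_def f_def)
  have "\<forall>i\<in>Ups N. (\<Sum>x\<in>S. c x * x i) = 0"
  proof
    fix i assume i: "i \<in> Ups N"
    show "(\<Sum>x\<in>S. c x * x i) = 0"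
    proof (cases "i \<in> R")
      case False then show ?thesis using s1 i by auto
    next
      case True
      have "(\<Sum>x\<in>S. c x * x i) = (\<Sum>x\<in>S. c x * (\<alpha> i + (\<Sum>j\<in>Ups N - R. \<beta> i j * x j)))"
        using rep True by (intro sum.cong) auto
      also have "\<dots> = \<alpha> i * (\<Sum>x\<in>S. c x) + (\<Sum>j\<in>Ups N - R. \<beta> i j * (\<Sum>x\<in>S. c x * x j))"
        by (simp add: algebra_simps sum.distrib sum_distrib_left sum_distrib_right sum.swap[of _ S])
      also have "\<dots> = 0" using s0 s1 by simp
      finally show ?thesis .
    qed
  qed
  then have "\<forall>x\<in>S. c x = 0" using ai s0 unfolding aff_indep_def by blast
  then show False using c(1) by auto
qed

definition ee :: "'b \<Rightarrow> 'b \<Rightarrow> real" where "ee d = (\<lambda>c. if c = d then 1 else 0)"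

lemma finite_Ups: "finite N \<Longrightarrow> finite (Ups N)"
  by (rule finite_subset[of _ "N \<times> Pow N"]) (auto simp: Ups_def)

lemma Ups_ne: "finite N \<Longrightarrow> card N \<ge> 2 \<Longrightarrow> Ups N \<noteq> {}"
proof -
  assume "finite N" "card N \<ge> 2"
  then obtain a b where "a \<in> N" "b \<in> N" "a \<noteq> b"
    by (metis One_nat_def card_le_Suc0_iff_eq not_less_eq_eq numeral_2_eq_2)
  then have "(a, {b}) \<in> Ups N" by (auto simp: Ups_def)
  then show ?thesis by auto
qed

lemma finite_DAGs: "finite N \<Longrightarrow> finite (DAGs N)"
  by (rule finite_subset[of _ "Pow (N \<times> N)"]) (auto simp: DAGs_def)

lemma eta_in_P:
  assumes "finite N" "E \<in> DAGs N" shows "eta N E \<in> P N"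
proof -
  let ?V = "eta N ` DAGs N"
  have fV: "finite ?V" using finite_DAGs[OF assms(1)] by auto
  have m: "eta N E \<in> ?V" using assms by auto
  define w where "w = (\<lambda>v. if v = eta N E then (1::real) else 0)"
  have "(\<Sum>v\<in>?V. w v) = 1" using fV m unfolding w_def by (simp add: sum.delta)
  moreover have "eta N E = (\<lambda>c. \<Sum>v\<in>?V. w v * v c)"
  proof
    fix c
    have "(\<Sum>v\<in>?V. w v * v c) = (\<Sum>v\<in>?V. if v = eta N E then eta N E c else 0)"
      by (rule sum.cong) (auto simp: w_def)
    then show "eta N E c = (\<Sum>v\<in>?V. w v * v c)" using fV m by (simp add: sum.delta)
  qed
  moreover have "\<forall>v\<in>?V. w v \<ge> 0" by (simp add: w_def)
  ultimately show ?thesis unfolding P_def conv_fin_def by blast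
qed

lemma eta_empty: "eta N {} = (\<lambda>c. 0)"
  by (auto simp: eta_def pa_def Ups_def)

lemma empty_DAG: "{} \<in> DAGs N" by (simp add: DAGs_def acyclic_def)

lemma zero_in_P: "finite N \<Longrightarrow> (\<lambda>c. 0) \<in> P N"
  using eta_in_P[OF _ empty_DAG, of N] eta_empty[of N] by simp

lemma star_DAG:
  assumes "(a, B) \<in> Ups N" shows "(\<lambda>b. (b, a)) ` B \<in> DAGs N"
proof -
  let ?E = "(\<lambda>b. (b, a)) ` B"
  have aB: "a \<notin> B" "a \<in> N" "B \<subseteq> N" using assms by (auto simp: Ups_def)
  have "(x, y) \<in> ?E" if "(x, y) \<in> ?E\<^sup>+" for x y
    using that
  proof (induction rule: trancl_induct)
    case (base y) then show ?case .
  next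
    case (step y z) then show ?case using aB by auto
  qed
  then have "acyclic ?E" unfolding acyclic_def using aB by auto
  then show ?thesis using aB unfolding DAGs_def by auto
qed

lemma eta_star:
  assumes "(a, B) \<in> Ups N" shows "eta N ((\<lambda>b. (b, a)) ` B) = ee (a, B)"
  using assms by (auto simp: eta_def ee_def pa_def Ups_def fun_eq_iff)

lemma ee_in_P: "finite N \<Longrightarrow> d \<in> Ups N \<Longrightarrow> ee d \<in> P N"
  by (cases d) (metis eta_in_P eta_star star_DAG)

lemma inner_ee: "finite N \<Longrightarrow> d \<in> Ups N \<Longrightarrow> inner_Ups N o' (ee d) = o' d"
  by (simp add: inner_Ups_def ee_def finite_Ups if_distrib[of "\<lambda>x. _ * x"] sum.delta cong: if_cong)

lemma inner_zero: "inner_Ups N o' (\<lambda>c. 0) = 0"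
  by (simp add: inner_Ups_def)

lemma P_nonneg: "x \<in> P N \<Longrightarrow> x c \<ge> 0"
  unfolding P_def conv_fin_def
  by (auto intro!: sum_nonneg mult_nonneg_nonneg simp: eta_def split: prod.split)

lemma std_indep:
  assumes fN: "finite N" and D: "D \<subseteq> Ups N"
  shows "aff_indep N (insert (\<lambda>c. 0) (ee ` D)) \<and> card (insert (\<lambda>c. 0) (ee ` D)) = card D + 1"
proof -
  have fD: "finite D" using D finite_Ups[OF fN] finite_subset by auto
  have inj: "inj_on ee D" by (auto simp: inj_on_def ee_def fun_eq_iff)
  have nz: "(\<lambda>c. 0) \<notin> ee ` D"
  proof
    assume "(\<lambda>c. 0) \<in> ee ` D"
    then obtain d where "d \<in> D" "(\<lambda>c. 0) = ee d" by (rule imageE) simp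
    then have "(0::real) = ee d d" by metis
    then show False by (simp add: ee_def)
  qed
  have card: "card (insert (\<lambda>c. 0) (ee ` D)) = card D + 1"
    using fD nz inj by (simp add: card_image)
  have "aff_indep N (insert (\<lambda>c. 0) (ee ` D))"
    unfolding aff_indep_def
  proof (intro conjI allI impI)
    show "finite (insert (\<lambda>c. 0) (ee ` D))" using fD by auto
    fix c :: "('a \<times> 'a set \<Rightarrow> real) \<Rightarrow> real"
    assume h: "(\<Sum>x\<in>insert (\<lambda>c. 0) (ee ` D). c x) = 0 \<and>
        (\<forall>i\<in>Ups N. (\<Sum>x\<in>insert (\<lambda>c. 0) (ee ` D). c x * x i) = 0)"
    have cd: "c (ee d) = 0" if d: "d \<in> D" for d
    proof -
      have "(\<Sum>x\<in>insert (\<lambda>c. 0) (ee ` D). c x * x d) = (\<Sum>x\<in>ee ` D. c x * x d)"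
        using fD nz by simp
      also have "\<dots> = (\<Sum>d'\<in>D. c (ee d') * ee d' d)"
        using inj by (simp add: sum.reindex)
      also have "\<dots> = c (ee d)"
        using fD d by (simp add: ee_def if_distrib[of "\<lambda>x. _ * x"] sum.delta eq_commute[of d] cong: if_cong)
      finally show ?thesis using h d D by auto
    qed
    have "(\<Sum>x\<in>insert (\<lambda>c. 0) (ee ` D). c x) = c (\<lambda>c. 0) + (\<Sum>d\<in>D. c (ee d))"
      using fD nz inj by (simp add: sum.reindex)
    then have c0: "c (\<lambda>c. 0) = 0" using h cd by simp
    show "\<forall>x\<in>insert (\<lambda>c. 0) (ee ` D). c x = 0" using c0 cd by auto
  qed
  then show ?thesis using card by simp
qed

lemma face_zero:
  assumes fN: "finite N" and val: "valid N o' u" and x: "x \<in> P N" and xu: "inner_Ups N o' x = u"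
    and vz: "\<forall>E\<in>DAGs N. inner_Ups N o' (eta N E) = u \<longrightarrow> eta N E c = 0"
  shows "x c = 0"
proof -
  let ?V = "eta N ` DAGs N"
  have fV: "finite ?V" using finite_DAGs[OF fN] by auto
  have "\<exists>w. (\<forall>v\<in>?V. w v \<ge> 0) \<and> (\<Sum>v\<in>?V. w v) = 1 \<and> x = (\<lambda>c. \<Sum>v\<in>?V. w v * v c)"
    using x unfolding P_def conv_fin_def by simp
  then obtain w where w: "\<forall>v\<in>?V. w v \<ge> 0" "(\<Sum>v\<in>?V. w v) = 1" "x = (\<lambda>c. \<Sum>v\<in>?V. w v * v c)"
    by (elim exE conjE) simp
  have le: "inner_Ups N o' v \<le> u" if "v \<in> ?V" for v
    using val that eta_in_P[OF fN] unfolding valid_def by auto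
  have "inner_Ups N o' x = (\<Sum>c\<in>Ups N. \<Sum>v\<in>?V. o' c * (w v * v c))"
    unfolding w(3) inner_Ups_def by (simp add: sum_distrib_left)
  also have "\<dots> = (\<Sum>v\<in>?V. \<Sum>c\<in>Ups N. o' c * (w v * v c))" by (rule sum.swap)
  also have "\<dots> = (\<Sum>v\<in>?V. w v * inner_Ups N o' v)"
    unfolding inner_Ups_def by (simp add: sum_distrib_left mult.left_commute)
  finally have e1: "inner_Ups N o' x = (\<Sum>v\<in>?V. w v * inner_Ups N o' v)" .
  have "(\<Sum>v\<in>?V. w v * (u - inner_Ups N o' v)) = (\<Sum>v\<in>?V. w v * u) - (\<Sum>v\<in>?V. w v * inner_Ups N o' v)"
    by (simp add: right_diff_distrib sum_subtractf)
  also have "\<dots> = (\<Sum>v\<in>?V. w v) * u - inner_Ups N o' x" using e1 by (simp add: sum_distrib_right)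
  also have "\<dots> = 0" using xu w(2) by simp
  finally have "(\<Sum>v\<in>?V. w v * (u - inner_Ups N o' v)) = 0" .
  moreover have "\<forall>v\<in>?V. w v * (u - inner_Ups N o' v) \<ge> 0" using w(1) le by simp
  ultimately have z: "\<forall>v\<in>?V. w v * (u - inner_Ups N o' v) = 0"
    using sum_nonneg_eq_0_iff[OF fV, of "\<lambda>v. w v * (u - inner_Ups N o' v)"] by simp
  have "\<forall>v\<in>?V. w v * v c = 0"
  proof
    fix v assume v: "v \<in> ?V"
    then obtain E where E: "E \<in> DAGs N" "v = eta N E" by (rule imageE) simp
    show "w v * v c = 0"
    proof (cases "w v = 0")
      case False
      then have "inner_Ups N o' v = u" using z[rule_format, OF v] by simp
      then show ?thesis using vz E by simp
    qed simp
  qed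
  then have "(\<Sum>v\<in>?V. w v * v c) = 0" by (rule sum.neutral)
  then show ?thesis using w(3) by simp
qed

lemma inner_formula:
  assumes fN: "finite N"
  shows "inner_Ups N o' (eta N E) =
     (\<Sum>y\<in>N. if (y, pa E y) \<in> Ups N then o' (y, pa E y) else 0)"
proof -
  have fU: "finite (Ups N)" using finite_Ups[OF fN] .
  have "(\<Sum>y\<in>N. if (y, pa E y) \<in> Ups N then o' (y, pa E y) else 0)
      = (\<Sum>y\<in>N. \<Sum>c\<in>Ups N. if c = (y, pa E y) then o' c else 0)"
    using fU by (simp add: sum.delta')
  also have "\<dots> = (\<Sum>c\<in>Ups N. \<Sum>y\<in>N. if c = (y, pa E y) then o' c else 0)"
    by (rule sum.swap)
  also have "\<dots> = (\<Sum>c\<in>Ups N. o' c * eta N E c)"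
  proof (rule sum.cong)
    fix c assume c: "c \<in> Ups N"
    obtain a B where ab: "c = (a, B)" by fastforce
    have aN: "a \<in> N" using c ab by (auto simp: Ups_def)
    have "(\<Sum>y\<in>N. if c = (y, pa E y) then o' c else 0) = (\<Sum>y\<in>N. if y = a then (if B = pa E a then o' c else 0) else 0)"
      by (rule sum.cong) (auto simp: ab)
    also have "\<dots> = (if B = pa E a then o' c else 0)" using fN aN by (simp add: sum.delta')
    finally show "(\<Sum>y\<in>N. if c = (y, pa E y) then o' c else 0) = o' c * eta N E c"
      using c by (simp add: ab eta_def)
  qed simp
  finally show ?thesis unfolding inner_Ups_def by simp
qed

lemma modify:
  assumes fN: "finite N" and E: "E \<in> DAGs N" and aN: "a \<in> N" and A': "A' \<subseteq> pa E a"
  defines "E' \<equiv> {p\<in>E. snd p \<noteq> a} \<union> (\<lambda>b. (b, a)) ` A'"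
  shows "E' \<in> DAGs N \<and> inner_Ups N o' (eta N E') = inner_Ups N o' (eta N E)
      - (if (a, pa E a) \<in> Ups N then o' (a, pa E a) else 0) + (if (a, A') \<in> Ups N then o' (a, A') else 0)"
proof -
  have sub: "E' \<subseteq> E" using A' unfolding E'_def pa_def by auto
  have dag: "E' \<in> DAGs N" using E sub acyclic_subset unfolding DAGs_def by blast
  have paE': "pa E' y = (if y = a then A' else pa E y)" for y
    unfolding E'_def pa_def by auto
  define g where "g = (\<lambda>y B. if (y, B) \<in> Ups N then o' (y, B) else 0)"
  have "inner_Ups N o' (eta N E') = (\<Sum>y\<in>N. g y (pa E' y))"
    unfolding g_def by (rule inner_formula[OF fN])
  also have "\<dots> = g a (pa E' a) + (\<Sum>y\<in>N - {a}. g y (pa E' y))"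
    using fN aN by (simp add: sum.remove)
  also have "(\<Sum>y\<in>N - {a}. g y (pa E' y)) = (\<Sum>y\<in>N - {a}. g y (pa E y))"
    by (rule sum.cong) (auto simp: paE')
  also have "\<dots> = (\<Sum>y\<in>N. g y (pa E y)) - g a (pa E a)"
    using fN aN by (simp add: sum.remove)
  also have "(\<Sum>y\<in>N. g y (pa E y)) = inner_Ups N o' (eta N E)"
    unfolding g_def by (rule inner_formula[OF fN, symmetric])
  finally show ?thesis using dag by (simp add: paE' g_def)
qed

lemma vertex_A:
  assumes fN: "finite N" and val: "valid N o' u" and aA: "(a, A) \<in> Ups N" and neg: "o' (a, A) < 0"
  shows "\<forall>E\<in>DAGs N. inner_Ups N o' (eta N E) = u \<longrightarrow> eta N E (a, A) = 0"
proof (intro ballI impI)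
  fix E assume E: "E \<in> DAGs N" and Eu: "inner_Ups N o' (eta N E) = u"
  show "eta N E (a, A) = 0"
  proof (rule ccontr)
    assume "eta N E (a, A) \<noteq> 0"
    then have pA: "pa E a = A" by (auto simp: eta_def split: if_splits)
    have aN: "a \<in> N" using aA by (auto simp: Ups_def)
    have e: "({}, a) \<notin> {}" by simp
    have ne: "(a, {}) \<notin> Ups N" by (simp add: Ups_def)
    from modify[OF fN E aN, of "{}" o'] pA aA ne
    obtain E' where "E' \<in> DAGs N" "inner_Ups N o' (eta N E') = u - o' (a, A)"
      using Eu by auto
    then show False using neg val eta_in_P[OF fN] unfolding valid_def by fastforce
  qed
qed

lemma vertex_B:
  assumes fN: "finite N" and val: "valid N o' u" and aA: "(a, A) \<in> Ups N" and aB: "(a, B) \<in> Ups N"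
    and AB: "A \<subseteq> B" and lt: "o' (a, B) < o' (a, A)"
  shows "\<forall>E\<in>DAGs N. inner_Ups N o' (eta N E) = u \<longrightarrow> eta N E (a, B) = 0"
proof (intro ballI impI)
  fix E assume E: "E \<in> DAGs N" and Eu: "inner_Ups N o' (eta N E) = u"
  show "eta N E (a, B) = 0"
  proof (rule ccontr)
    assume "eta N E (a, B) \<noteq> 0"
    then have pB: "pa E a = B" by (auto simp: eta_def split: if_splits)
    have aN: "a \<in> N" using aA by (auto simp: Ups_def)
    from modify[OF fN E aN, of A o'] pB aA aB AB
    obtain E' where "E' \<in> DAGs N" "inner_Ups N o' (eta N E') = u - o' (a, B) + o' (a, A)"
      using Eu by auto
    then show False using lt val eta_in_P[OF fN] unfolding valid_def by fastforce
  qed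
qed

lemma facet_contra:
  assumes fN: "finite N" and fd: "facet_defining N o' u" and u: "u \<noteq> 0" and c: "c \<in> Ups N"
    and z: "\<forall>x\<in>face N o' u. x c = 0"
  shows False
proof -
  have fU: "finite (Ups N)" using finite_Ups[OF fN] .
  have cardU: "card (Ups N) \<ge> 1" using fU c by (metis One_nat_def Suc_leI card_gt_0_iff empty_iff)
  obtain S where S: "S \<subseteq> face N o' u" "aff_indep N S" "card S = card (Ups N) - 1 + 1"
    using fd unfolding facet_defining_def has_aff_dim_def by blast
  have cS: "card S = card (Ups N)" using S(3) cardU by simp
  then have "S \<noteq> {}" using cardU by auto
  then obtain x0 where x0: "x0 \<in> S" by auto
  have inner_eq: "inner_Ups N o' x = u" if "x \<in> S" for x using that S(1) unfolding face_def by auto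
  show False
  proof (cases "\<exists>i0\<in>Ups N - {c}. o' i0 \<noteq> 0")
    case True
    then obtain i0 where i0: "i0 \<in> Ups N" "i0 \<noteq> c" "o' i0 \<noteq> 0" by auto
    define R where "R = {c, i0}"
    define \<alpha> where "\<alpha> = (\<lambda>r. if r = i0 then u / o' i0 else 0)"
    define \<beta> where "\<beta> = (\<lambda>r i. if r = i0 then - o' i / o' i0 else 0)"
    have R: "R \<subseteq> Ups N" using c i0 unfolding R_def by auto
    have rep: "\<forall>x\<in>S. \<forall>r\<in>R. x r = \<alpha> r + (\<Sum>i\<in>Ups N - R. \<beta> r i * x i)"
    proof (intro ballI)
      fix x r assume x: "x \<in> S" and r: "r \<in> R"
      have xc: "x c = 0" using z x S(1) by auto
      have "u = (\<Sum>d\<in>Ups N. o' d * x d)" using inner_eq[OF x] unfolding inner_Ups_def by simp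
      also have "\<dots> = o' c * x c + (\<Sum>d\<in>Ups N - {c}. o' d * x d)"
        using fU c by (simp add: sum.remove)
      also have "(\<Sum>d\<in>Ups N - {c}. o' d * x d) = o' i0 * x i0 + (\<Sum>d\<in>Ups N - {c} - {i0}. o' d * x d)"
        using fU i0 by (simp add: sum.remove)
      also have "Ups N - {c} - {i0} = Ups N - R" unfolding R_def by auto
      finally have eq: "u = o' i0 * x i0 + (\<Sum>d\<in>Ups N - R. o' d * x d)" using xc by simp
      show "x r = \<alpha> r + (\<Sum>i\<in>Ups N - R. \<beta> r i * x i)"
      proof (cases "r = i0")
        case True
        have "(\<Sum>i\<in>Ups N - R. \<beta> r i * x i) = - (\<Sum>d\<in>Ups N - R. o' d * x d) / o' i0"
          using True by (simp add: \<beta>_def sum_divide_distrib[symmetric] sum_negf)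
        then show ?thesis using True eq i0(3) by (simp add: \<alpha>_def field_simps)
      next
        case False
        then have "r = c" using r unfolding R_def by auto
        then show ?thesis using False xc by (simp add: \<alpha>_def \<beta>_def)
      qed
    qed
    have "card S \<le> card (Ups N - R) + 1" by (rule aff_bound[OF fU R S(2) rep])
    moreover have "card (Ups N - R) = card (Ups N) - 2"
      using R fU i0 unfolding R_def by (simp add: card_Diff_subset)
    moreover have "card (Ups N) \<ge> 2"
    proof -
      have "{c, i0} \<subseteq> Ups N" using R R_def by simp
      then have "card {c, i0} \<le> card (Ups N)" using fU by (rule card_mono[rotated])
      then show ?thesis using i0 by simp
    qed
    ultimately show False using cS by simp
  next
    case False
    have "inner_Ups N o' x0 = (\<Sum>d\<in>Ups N. 0)"
      unfolding inner_Ups_def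
    proof (rule sum.cong)
      fix d assume "d \<in> Ups N"
      then show "o' d * x0 d = 0" using False z x0 S(1) by (cases "d = c") auto
    qed simp
    then show False using inner_eq[OF x0] u by simp
  qed
qed

theorem lemma2:
  fixes N :: "'a set" and o' :: "'a \<times> 'a set \<Rightarrow> real" and u :: real
  assumes "finite N" and "card N \<ge> 2" and "valid N o' u"
  shows "u \<ge> 0
    \<and> (u = 0 \<longleftrightarrow> eta N {} \<in> face N o' u)
    \<and> (u = 0 \<longrightarrow> (\<forall>c\<in>Ups N. o' c \<le> 0))
    \<and> ((facet_defining N o' u \<and> eta N {} \<in> face N o' u) \<longleftrightarrow>
         (u = 0 \<and> (\<exists>c\<in>Ups N. \<exists>t>0. \<forall>d\<in>Ups N. o' d = (if d = c then - t else 0))))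
    \<and> ((facet_defining N o' u \<and> u > 0) \<longrightarrow>
         (\<forall>a\<in>N. \<forall>A B. A \<noteq> {} \<and> A \<subseteq> B \<and> B \<subseteq> N - {a} \<longrightarrow>
              o' (a, A) \<le> o' (a, B) \<and> 0 \<le> o' (a, A)))"
proof -
  note fN = assms(1) and val = assms(3)
  have fU: "finite (Ups N)" using finite_Ups[OF fN] .
  have Une: "Ups N \<noteq> {}" using Ups_ne[OF fN assms(2)] .
  have cardU: "card (Ups N) \<ge> 1" using fU Une by (metis One_nat_def Suc_leI card_gt_0_iff)
  have z0: "(\<lambda>c. 0) \<in> P N" using zero_in_P[OF fN] .
  have P1: "u \<ge> 0" using val z0 inner_zero[of N o'] unfolding valid_def by fastforce
  have P2: "u = 0 \<longleftrightarrow> eta N {} \<in> face N o' u"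
    using z0 inner_zero[of N o'] unfolding eta_empty face_def by auto
  have P3: "u = 0 \<longrightarrow> (\<forall>c\<in>Ups N. o' c \<le> 0)"
  proof (intro impI ballI)
    fix c assume "u = 0" "c \<in> Ups N"
    then show "o' c \<le> 0" using val ee_in_P[OF fN] inner_ee[OF fN] unfolding valid_def by metis
  qed
  have P4a: "u = 0 \<and> (\<exists>c\<in>Ups N. \<exists>t>0. \<forall>d\<in>Ups N. o' d = (if d = c then - t else 0))"
    if fd: "facet_defining N o' u" and f0: "eta N {} \<in> face N o' u"
  proof -
    have u0: "u = 0" using P2 f0 by simp
    have onp: "\<forall>c\<in>Ups N. o' c \<le> 0" using P3 u0 by simp
    have fz: "x d = 0" if x: "x \<in> face N o' u" and d: "d \<in> Ups N" "o' d < 0" for x d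
    proof -
      have xP: "x \<in> P N" and xi: "(\<Sum>d\<in>Ups N. o' d * x d) = 0"
        using x u0 unfolding face_def inner_Ups_def by auto
      have "(\<Sum>d\<in>Ups N. - (o' d * x d)) = 0" using xi by (simp add: sum_negf)
      moreover have "\<forall>d\<in>Ups N. - (o' d * x d) \<ge> 0"
        using onp P_nonneg[OF xP] by (simp add: mult_nonpos_nonneg)
      ultimately have "\<forall>d\<in>Ups N. - (o' d * x d) = 0"
        using sum_nonneg_eq_0_iff[OF fU, of "\<lambda>d. - (o' d * x d)"] by simp
      then show ?thesis using d by force
    qed
    obtain S where S: "S \<subseteq> face N o' u" "aff_indep N S" "card S = card (Ups N) - 1 + 1"
      and Smax: "\<forall>S\<subseteq>face N o' u. aff_indep N S \<longrightarrow> card S \<le> card (Ups N) - 1 + 1"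
      using fd unfolding facet_defining_def has_aff_dim_def by blast
    have ex: "\<exists>c\<in>Ups N. o' c < 0"
    proof (rule ccontr)
      assume "\<not> ?thesis"
      then have o0: "\<forall>c\<in>Ups N. o' c = 0" using onp by force
      let ?T = "insert (\<lambda>c. 0) (ee ` Ups N)"
      have T: "aff_indep N ?T" "card ?T = card (Ups N) + 1" using std_indep[OF fN, of "Ups N"] by auto
      have "?T \<subseteq> face N o' u"
        using z0 ee_in_P[OF fN] inner_ee[OF fN] inner_zero[of N o'] o0 u0 unfolding face_def by auto
      then have "card ?T \<le> card (Ups N) - 1 + 1" using Smax T(1) by blast
      then show False using T(2) cardU by simp
    qed
    then obtain c where c: "c \<in> Ups N" "o' c < 0" by blast
    have others: "o' d = 0" if d: "d \<in> Ups N" "d \<noteq> c" for d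
    proof (rule ccontr)
      assume "o' d \<noteq> 0"
      then have dn: "o' d < 0" using onp d by force
      define R where "R = {c, d}"
      have R: "R \<subseteq> Ups N" using c d unfolding R_def by auto
      have rep: "\<forall>x\<in>S. \<forall>r\<in>R. x r = (\<lambda>_. 0) r + (\<Sum>i\<in>Ups N - R. (\<lambda>_ _. 0) r i * x i)"
      proof (intro ballI)
        fix x r assume x: "x \<in> S" and r: "r \<in> R"
        have xf: "x \<in> face N o' u" using x S(1) by blast
        have "x r = 0"
        proof (cases "r = c")
          case True then show ?thesis using fz[OF xf c] by simp
        next
          case False then have "r = d" using r unfolding R_def by blast
          then show ?thesis using fz[OF xf d(1) dn] by simp
        qed
        then show "x r = (\<lambda>_. 0) r + (\<Sum>i\<in>Ups N - R. (\<lambda>_ _. 0) r i * x i)" by simp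
      qed
      have "card S \<le> card (Ups N - R) + 1" by (rule aff_bound[OF fU R S(2) rep])
      moreover have "card (Ups N - R) = card (Ups N) - 2"
        using R fU d unfolding R_def by (simp add: card_Diff_subset)
      moreover have "card (Ups N) \<ge> 2"
      proof -
        have "card R \<le> card (Ups N)" using fU R by (rule card_mono)
        then show ?thesis using d unfolding R_def by simp
      qed
      ultimately show False using S(3) by simp
    qed
    show ?thesis
      using u0 c others by (intro conjI bexI[of _ c] exI[of _ "- o' c"]) auto
  qed
  have P4b: "facet_defining N o' u \<and> eta N {} \<in> face N o' u"
    if u0: "u = 0" and c: "c \<in> Ups N" and t: "t > 0" and od: "\<forall>d\<in>Ups N. o' d = (if d = c then - t else 0)"
    for c t
  proof -
    have inn: "inner_Ups N o' x = - t * x c" for x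
    proof -
      have "inner_Ups N o' x = (\<Sum>d\<in>Ups N. if d = c then - t * x c else 0)"
        unfolding inner_Ups_def by (rule sum.cong) (auto simp: od)
      then show ?thesis using fU c by (simp add: sum.delta)
    qed
    have valid': "valid N o' u" unfolding valid_def
    proof
      fix x assume "x \<in> P N"
      then have "x c \<ge> 0" by (rule P_nonneg)
      then show "inner_Ups N o' x \<le> u" using inn[of x] u0 t by simp
    qed
    have facex: "x c = 0" if "x \<in> face N o' u" for x
      using that inn t u0 unfolding face_def by auto
    let ?T = "insert (\<lambda>c. 0) (ee ` (Ups N - {c}))"
    have T: "aff_indep N ?T" "card ?T = card (Ups N - {c}) + 1" using std_indep[OF fN, of "Ups N - {c}"] by auto
    have Tsub: "?T \<subseteq> face N o' u"
    proof
      fix x assume "x \<in> ?T"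
      then show "x \<in> face N o' u"
      proof
        assume "x = (\<lambda>c. 0)" then show ?thesis using z0 inner_zero[of N o'] u0 unfolding face_def by auto
      next
        assume "x \<in> ee ` (Ups N - {c})"
        then obtain d where d: "d \<in> Ups N - {c}" "x = ee d" by (rule imageE) simp
        have "ee d \<in> P N" using ee_in_P[OF fN] d by simp
        moreover have "inner_Ups N o' (ee d) = 0" using inner_ee[OF fN, of d o'] od d by simp
        ultimately show ?thesis using d(2) u0 unfolding face_def by simp
      qed
    qed
    have cd: "card (Ups N - {c}) = card (Ups N) - 1" using fU c by simp
    have "has_aff_dim N (face N o' u) (card (Ups N) - 1)"
      unfolding has_aff_dim_def
    proof (intro conjI allI impI)
      show "\<exists>S\<subseteq>face N o' u. aff_indep N S \<and> card S = card (Ups N) - 1 + 1"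
        using Tsub T cd by (intro exI[of _ ?T]) simp
      fix S
      assume S: "S \<subseteq> face N o' u" "aff_indep N S"
      have rp: "\<forall>x\<in>S. \<forall>r\<in>{c}. x r = (\<lambda>_. 0) r + (\<Sum>i\<in>Ups N - {c}. (\<lambda>_ _. 0) r i * x i)"
      proof (intro ballI)
        fix x r assume "x \<in> S" "r \<in> {c}"
        then show "x r = (\<lambda>_. 0) r + (\<Sum>i\<in>Ups N - {c}. (\<lambda>_ _. 0) r i * x i)"
          using facex[of x] S(1) by auto
      qed
      have "card S \<le> card (Ups N - {c}) + 1"
        by (rule aff_bound[OF fU _ S(2) rp]) (use c in simp)
      then show "card S \<le> card (Ups N) - 1 + 1" using cd by simp
    qed
    moreover have "eta N {} \<in> face N o' u" using P2 u0 by blast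
    ultimately show ?thesis using valid' unfolding facet_defining_def by simp
  qed
  have P5: "(facet_defining N o' u \<and> u > 0) \<longrightarrow>
         (\<forall>a\<in>N. \<forall>A B. A \<noteq> {} \<and> A \<subseteq> B \<and> B \<subseteq> N - {a} \<longrightarrow>
              o' (a, A) \<le> o' (a, B) \<and> 0 \<le> o' (a, A))"
  proof (intro impI ballI allI, elim conjE)
    fix a A B assume fd: "facet_defining N o' u" and up: "u > 0" and a: "a \<in> N"
      and A: "A \<noteq> {}" "A \<subseteq> B" "B \<subseteq> N - {a}"
    have aA: "(a, A) \<in> Ups N" and aB: "(a, B) \<in> Ups N" using a A unfolding Ups_def by auto
    have v: "valid N o' u" using fd unfolding facet_defining_def by simp
    have "0 \<le> o' (a, A)"
    proof (rule ccontr)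
      assume "\<not> ?thesis"
      then have "\<forall>x\<in>face N o' u. x (a, A) = 0"
        using face_zero[OF fN v] vertex_A[OF fN v aA] unfolding face_def by auto
      then show False using facet_contra[OF fN fd _ aA] up by simp
    qed
    moreover have "o' (a, A) \<le> o' (a, B)"
    proof (rule ccontr)
      assume "\<not> ?thesis"
      then have "\<forall>x\<in>face N o' u. x (a, B) = 0"
        using face_zero[OF fN v] vertex_B[OF fN v aA aB A(2)] unfolding face_def by auto
      then show False using facet_contra[OF fN fd _ aB] up by simp
    qed
    ultimately show "o' (a, A) \<le> o' (a, B) \<and> 0 \<le> o' (a, A)" by simp
  qed
  have P4: "(facet_defining N o' u \<and> eta N {} \<in> face N o' u) \<longleftrightarrow>
         (u = 0 \<and> (\<exists>c\<in>Ups N. \<exists>t>0. \<forall>d\<in>Ups N. o' d = (if d = c then - t else 0)))"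
  proof
    assume "facet_defining N o' u \<and> eta N {} \<in> face N o' u"
    then show "u = 0 \<and> (\<exists>c\<in>Ups N. \<exists>t>0. \<forall>d\<in>Ups N. o' d = (if d = c then - t else 0))"
      using P4a by blast
  next
    assume h: "u = 0 \<and> (\<exists>c\<in>Ups N. \<exists>t>0. \<forall>d\<in>Ups N. o' d = (if d = c then - t else 0))"
    then obtain c t where "c \<in> Ups N" "t > 0" "\<forall>d\<in>Ups N. o' d = (if d = c then - t else 0)" by blast
    then show "facet_defining N o' u \<and> eta N {} \<in> face N o' u" using P4b h by blast
  qed
  show ?thesis using P1 P2 P3 P4 P5 by (intro conjI)
qed

end
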